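(* There exist constants $\varepsilon>0$ and $C>0$ such that $g(n)\le C(2-\varepsilon)^n$ for all positive integers $n$.
   Context: $[m]_0=\{0,1,\dots,m\}$. For positive integers $m$, $g(m)=\sum 2^{-|(S_1+S_2)\cap[m]_0|}$, the sum over all pairs $S_1,S_2\subseteq[m]_0$ with $0\in S_1\cap S_2$ and $m+1\notin S_1+S_2$, where $S_1+S_2=\{u+v:u\in S_1,v\in S_2\}$; $g(m)=1$ for integers $m\le 0$. *)

theory Defs
  imports Complex_Main
begin

definition sumset :: "nat set \<Rightarrow> nat set \<Rightarrow> nat set" where
  "sumset A B = {u + v | u v. u \<in> A \<and> v \<in> B}"

definition g :: "int \<Rightarrow> real" where
  "g m = (if m \<le> 0 then 1 else
     (let n = nat m in
      \<Sum>p \<in> {(S1, S2). S1 \<subseteq> {0..n} \<and> S2 \<subseteq> {0..n} \<and> 0 \<in> S1 \<and> 0 \<in> S2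
                        \<and> n + 1 \<notin> sumset S1 S2}.
        (1/2) ^ card (sumset (fst p) (snd p) \<inter> {0..n})))"

end

theory Submission
  imports Defs "HOL-Library.FuncSet"
begin

datatype st = St (a1: bool) (b1: bool) (a2: bool) (b2: bool)

definition wt :: "bool \<Rightarrow> real" where "wt c = (if c then 1/2 else 1)"

definition hh :: "st \<Rightarrow> real" where
  "hh s = (if b1 s then (if a2 s \<or> b2 s then 11/25 else 19/25)
                   else (if a2 s \<or> b2 s then 63/100 else 21/20))"

definition ok :: "nat \<Rightarrow> nat \<Rightarrow> st set" where
  "ok x u = {s. \<not>(a1 s \<and> b2 s) \<and> \<not>(b1 s \<and> a2 s) \<and> (u < x \<longrightarrow> \<not> a1 s) \<and> (u = x \<longrightarrow> a1 s)}"

lemma ok_gen: "x < u \<Longrightarrow> ok x u =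
  {St False False False False, St False False False True, St False False True False,
   St False True False False, St False True False True,
   St True False False False, St True False True False,
   St True True False False, St False False True True}"
  unfolding ok_def apply (rule set_eqI) apply (case_tac xa) by auto


lemma ok_lt: "u < x \<Longrightarrow> ok x u =
  {St False False False False, St False False False True, St False False True False,
   St False True False False, St False True False True, St False False True True}"
  unfolding ok_def apply (rule set_eqI) apply (case_tac xa) by auto

lemma ok_eq: "ok x x = {St True False False False, St True False True False, St True True False False}"
  unfolding ok_def apply (rule set_eqI) apply (case_tac xa) by auto

definition rho :: real where "rho = 39/10"

lemma step_h: "x < u \<Longrightarrow>
  (\<Sum>s\<in>ok x u. wt (a1 s \<or> b1 s \<or> b1 p) * hh s * wt (a2 p \<or> b2 p \<or> b2 s)) \<le> rho * hh p"
  apply (simp add: ok_gen)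
  apply (cases p) by (auto simp: wt_def hh_def rho_def)

lemma step_w: "x < u \<Longrightarrow>
  (\<Sum>s\<in>ok x u. wt (a1 s \<or> b1 s \<or> b1 p) * wt (a2 s \<or> b2 s) * wt (a2 p \<or> b2 p \<or> b2 s)) \<le> rho * hh p"
  apply (simp add: ok_gen)
  apply (cases p) by (auto simp: wt_def hh_def rho_def)

lemma root_h: "u \<le> x \<Longrightarrow> (\<Sum>s\<in>ok x u. wt (a1 s \<or> b1 s) * hh s) \<le> rho"
  apply (cases "u < x")
   apply (simp add: ok_lt wt_def hh_def rho_def)
  apply (simp add: ok_eq wt_def hh_def rho_def)
  done

lemma root_w: "u \<le> x \<Longrightarrow> (\<Sum>s\<in>ok x u. wt (a1 s \<or> b1 s) * wt (a2 s \<or> b2 s)) \<le> rho"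
  apply (cases "u < x")
   apply (simp add: ok_lt wt_def hh_def rho_def)
  apply (simp add: ok_eq wt_def hh_def rho_def)
  done


definition wu :: "nat \<Rightarrow> (nat \<Rightarrow> st) \<Rightarrow> nat \<Rightarrow> real" where
  "wu x \<sigma> u = wt (a1 (\<sigma> u) \<or> b1 (\<sigma> u) \<or> (x < u \<and> b1 (\<sigma> (u - x))))"
definition wv :: "nat \<Rightarrow> nat \<Rightarrow> (nat \<Rightarrow> st) \<Rightarrow> nat \<Rightarrow> real" where
  "wv k x \<sigma> u = wt (a2 (\<sigma> u) \<or> b2 (\<sigma> u) \<or> (u + x \<le> k \<and> b2 (\<sigma> (u + x))))"
definition HH :: "nat \<Rightarrow> nat \<Rightarrow> nat \<Rightarrow> st \<Rightarrow> real" where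
  "HH k x u s = (if u + x \<le> k then hh s else wt (a2 s \<or> b2 s))"
definition fac :: "nat \<Rightarrow> nat \<Rightarrow> nat \<Rightarrow> (nat \<Rightarrow> st) \<Rightarrow> nat \<Rightarrow> real" where
  "fac k x j \<sigma> u = wu x \<sigma> u * (if u + x \<le> j then wv k x \<sigma> u else HH k x u (\<sigma> u))"
definition Phi :: "nat \<Rightarrow> nat \<Rightarrow> nat \<Rightarrow> (nat \<Rightarrow> st) \<Rightarrow> real" where
  "Phi k x j \<sigma> = (\<Prod>u\<in>{1..j}. fac k x j \<sigma> u)"

lemma wt_nn: "0 \<le> wt c" by (simp add: wt_def)
lemma hh_nn: "0 \<le> hh s" by (simp add: hh_def)
lemma fac_nn: "0 \<le> fac k x j \<sigma> u"
  by (simp add: fac_def wu_def wv_def HH_def wt_nn hh_nn)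

lemma keyg:
  assumes x1: "1 \<le> x" and jk: "Suc j \<le> k"
  shows "(\<Sum>y\<in>ok x (Suc j). Phi k x (Suc j) (G(Suc j := y))) \<le> rho * Phi k x j G"
proof (cases "x \<le> j")
  case True
  define t where "t = Suc j - x"
  have t1: "t \<in> {1..j}" using True x1 by (auto simp: t_def)
  define R where "R = (\<Prod>u\<in>{1..j}-{t}. fac k x j G u)"
  have Rnn: "0 \<le> R" unfolding R_def by (intro prod_nonneg) (simp add: fac_nn)
  have wunn: "0 \<le> wu x G t" by (simp add: wu_def wt_nn)
  have eqrest: "(\<Prod>u\<in>{1..j}-{t}. fac k x (Suc j) (G(Suc j := y)) u) = R" for y
    unfolding R_def
  proof (rule prod.cong[OF refl])
    fix u assume u: "u \<in> {1..j} - {t}"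
    hence "u + x \<noteq> Suc j" using True by (auto simp: t_def)
    with u show "fac k x (Suc j) (G(Suc j := y)) u = fac k x j G u"
      by (auto simp: fac_def wu_def wv_def HH_def)
  qed
  have phis: "Phi k x (Suc j) (G(Suc j := y)) =
      (wt (a1 y \<or> b1 y \<or> b1 (G t)) * HH k x (Suc j) y * wt (a2 (G t) \<or> b2 (G t) \<or> b2 y)) * (wu x G t * R)" for y
  proof -
    have "Phi k x (Suc j) (G(Suc j := y)) = fac k x (Suc j) (G(Suc j := y)) (Suc j) *
        (\<Prod>u\<in>{1..j}. fac k x (Suc j) (G(Suc j := y)) u)"
      unfolding Phi_def by (simp add: atLeastAtMostSuc_conv)
    also have "(\<Prod>u\<in>{1..j}. fac k x (Suc j) (G(Suc j := y)) u) =
        fac k x (Suc j) (G(Suc j := y)) t * (\<Prod>u\<in>{1..j}-{t}. fac k x (Suc j) (G(Suc j := y)) u)"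
      using t1 by (simp add: prod.remove)
    also have "fac k x (Suc j) (G(Suc j := y)) (Suc j) = wt (a1 y \<or> b1 y \<or> b1 (G t)) * HH k x (Suc j) y"
      using True x1 by (auto simp: fac_def wu_def t_def)
    also have "fac k x (Suc j) (G(Suc j := y)) t = wu x G t * wt (a2 (G t) \<or> b2 (G t) \<or> b2 y)"
      using True x1 t1 jk by (auto simp: fac_def wu_def wv_def t_def)
    finally show ?thesis unfolding eqrest by (simp only: ac_simps)
  qed
  have phij: "Phi k x j G = hh (G t) * (wu x G t * R)"
  proof -
    have "Phi k x j G = fac k x j G t * R"
      unfolding Phi_def R_def using t1 by (simp add: prod.remove)
    also have "fac k x j G t = wu x G t * hh (G t)"
      using True x1 t1 jk by (auto simp: fac_def HH_def t_def)
    finally show ?thesis by (simp add: mult_ac)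
  qed
  have inner: "(\<Sum>y\<in>ok x (Suc j). wt (a1 y \<or> b1 y \<or> b1 (G t)) * HH k x (Suc j) y * wt (a2 (G t) \<or> b2 (G t) \<or> b2 y))
      \<le> rho * hh (G t)"
  proof (cases "Suc j + x \<le> k")
    case True
    then show ?thesis using step_h[of x "Suc j" "G t"] \<open>x \<le> j\<close> by (simp add: HH_def)
  next
    case False
    then show ?thesis using step_w[of x "Suc j" "G t"] \<open>x \<le> j\<close> by (simp add: HH_def)
  qed
  have "(\<Sum>y\<in>ok x (Suc j). Phi k x (Suc j) (G(Suc j := y))) =
     (\<Sum>y\<in>ok x (Suc j). wt (a1 y \<or> b1 y \<or> b1 (G t)) * HH k x (Suc j) y * wt (a2 (G t) \<or> b2 (G t) \<or> b2 y)) * (wu x G t * R)"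
    by (simp add: phis sum_distrib_right)
  also have "\<dots> \<le> (rho * hh (G t)) * (wu x G t * R)"
    by (rule mult_right_mono[OF inner]) (simp add: Rnn wunn)
  also have "\<dots> = rho * Phi k x j G" by (simp add: phij mult_ac)
  finally show ?thesis .
next
  case False
  have eqrest: "(\<Prod>u\<in>{1..j}. fac k x (Suc j) (G(Suc j := y)) u) = Phi k x j G" for y
    unfolding Phi_def
  proof (rule prod.cong[OF refl])
    fix u assume u: "u \<in> {1..j}"
    with False show "fac k x (Suc j) (G(Suc j := y)) u = fac k x j G u"
      by (auto simp: fac_def wu_def wv_def HH_def)
  qed
  have phis: "Phi k x (Suc j) (G(Suc j := y)) = (wt (a1 y \<or> b1 y) * HH k x (Suc j) y) * Phi k x j G" for y
  proof -
    have "Phi k x (Suc j) (G(Suc j := y)) = fac k x (Suc j) (G(Suc j := y)) (Suc j) *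
        (\<Prod>u\<in>{1..j}. fac k x (Suc j) (G(Suc j := y)) u)"
      unfolding Phi_def by (simp add: atLeastAtMostSuc_conv)
    also have "fac k x (Suc j) (G(Suc j := y)) (Suc j) = wt (a1 y \<or> b1 y) * HH k x (Suc j) y"
      using False x1 by (simp add: fac_def wu_def)
    finally show ?thesis unfolding eqrest by (simp only: ac_simps)
  qed
  have inner: "(\<Sum>y\<in>ok x (Suc j). wt (a1 y \<or> b1 y) * HH k x (Suc j) y) \<le> rho"
  proof (cases "Suc j + x \<le> k")
    case True
    then show ?thesis using root_h[of "Suc j" x] False by (simp add: HH_def)
  next
    case False
    then show ?thesis using root_w[of "Suc j" x] \<open>\<not> x \<le> j\<close> by (simp add: HH_def)
  qed
  have Pnn: "0 \<le> Phi k x j G" unfolding Phi_def by (intro prod_nonneg) (simp add: fac_nn)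
  have "(\<Sum>y\<in>ok x (Suc j). Phi k x (Suc j) (G(Suc j := y))) =
      (\<Sum>y\<in>ok x (Suc j). wt (a1 y \<or> b1 y) * HH k x (Suc j) y) * Phi k x j G"
    by (simp add: phis sum_distrib_right)
  also have "\<dots> \<le> rho * Phi k x j G"
    by (rule mult_right_mono[OF inner Pnn])
  finally show ?thesis .
qed


lemma st_univ: "(UNIV :: st set) = (\<lambda>p. St (fst p) (fst (snd p)) (fst (snd (snd p))) (snd (snd (snd p)))) ` UNIV"
proof (rule set_eqI)
  fix s :: st
  show "s \<in> UNIV \<longleftrightarrow> s \<in> (\<lambda>p. St (fst p) (fst (snd p)) (fst (snd (snd p))) (snd (snd (snd p)))) ` UNIV"
    by (simp add: image_iff) (metis st.collapse fst_conv snd_conv)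
qed

lemma finite_st: "finite (UNIV :: st set)"
  by (subst st_univ) simp

lemma finite_ok: "finite (ok x u)"
  by (rule finite_subset[OF subset_UNIV finite_st])

lemma main_ind:
  assumes x1: "1 \<le> x"
  shows "j \<le> k \<Longrightarrow> (\<Sum>\<sigma>\<in>PiE {1..j} (ok x). Phi k x j \<sigma>) \<le> rho ^ j"
proof (induction j)
  case 0
  then show ?case by (simp add: Phi_def)
next
  case (Suc j)
  have fin: "finite (PiE {1..j} (ok x))" by (simp add: finite_PiE finite_ok)
  have ins: "{1..Suc j} = insert (Suc j) {1..j}" by auto
  have "(\<Sum>\<sigma>\<in>PiE {1..Suc j} (ok x). Phi k x (Suc j) \<sigma>) =
     (\<Sum>p\<in>ok x (Suc j) \<times> PiE {1..j} (ok x). Phi k x (Suc j) ((\<lambda>(y, G). G(Suc j := y)) p))"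
    unfolding ins PiE_insert_eq
    by (subst sum.reindex) (auto intro: inj_combinator)
  also have "\<dots> = (\<Sum>y\<in>ok x (Suc j). \<Sum>G\<in>PiE {1..j} (ok x). Phi k x (Suc j) (G(Suc j := y)))"
    by (simp add: sum.cartesian_product split_beta)
  also have "\<dots> = (\<Sum>G\<in>PiE {1..j} (ok x). \<Sum>y\<in>ok x (Suc j). Phi k x (Suc j) (G(Suc j := y)))"
    by (rule sum.swap)
  also have "\<dots> \<le> (\<Sum>G\<in>PiE {1..j} (ok x). rho * Phi k x j G)"
    by (rule sum_mono) (rule keyg[OF x1], use Suc.prems in simp)
  also have "\<dots> = rho * (\<Sum>G\<in>PiE {1..j} (ok x). Phi k x j G)"
    by (simp add: sum_distrib_left)
  also have "\<dots> \<le> rho * rho ^ j"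
    using Suc by (intro mult_left_mono) (auto simp: rho_def)
  finally show ?case by simp
qed

lemma Phi_final: "Phi k x k \<sigma> = (\<Prod>u\<in>{1..k}. wu x \<sigma> u * wv k x \<sigma> u)"
  unfolding Phi_def by (rule prod.cong) (auto simp: fac_def HH_def wv_def)


lemma prod_wt: "finite I \<Longrightarrow> (\<Prod>u\<in>I. wt (P u)) = (1/2) ^ card {u\<in>I. P u}"
proof -
  assume fI: "finite I"
  have "(\<Prod>u\<in>I. wt (P u)) = (\<Prod>u\<in>I. if P u then (1/2::real) else 1)"
    by (simp add: wt_def)
  also have "\<dots> = (\<Prod>u\<in>{u\<in>I. P u}. (1/2::real))"
    using prod.inter_filter[of I "\<lambda>_. 1/2::real" P] fI by simp
  also have "\<dots> = (1/2) ^ card {u\<in>I. P u}" by simp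
  finally show ?thesis .
qed

lemma in_sumset: "a \<in> A \<Longrightarrow> b \<in> B \<Longrightarrow> a + b \<in> sumset A B"
  unfolding sumset_def by blast

definition sig :: "nat \<Rightarrow> nat set \<Rightarrow> nat set \<Rightarrow> nat \<Rightarrow> st" where
  "sig n A B = (\<lambda>u. if u \<in> {1..n div 2} then St (u\<in>A) (u\<in>B) (n+1-u \<in> A) (n+1-u \<in> B) else undefined)"

lemma conn:
  fixes n x :: nat and A B :: "nat set"
  defines "k \<equiv> n div 2"
  assumes x1: "1 \<le> x" and AS: "A \<subseteq> {0..n}" and BS: "B \<subseteq> {0..n}" and A0: "0 \<in> A" and B0: "0 \<in> B"
    and nS: "n + 1 \<notin> sumset A B" and gA: "A \<inter> {1..<x} = {}" and gx: "x \<le> n \<longrightarrow> x \<in> A"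
  shows "sig n A B \<in> PiE {1..k} (ok x)"
    and "(1/2::real) ^ card (sumset A B \<inter> {0..n}) \<le> (\<Prod>u\<in>{1..k}. wu x (sig n A B) u * wv k x (sig n A B) u)"
proof -
  have k2: "2 * k \<le> n" unfolding k_def by simp
  show "sig n A B \<in> PiE {1..k} (ok x)"
  proof (rule PiE_I)
    fix u assume u: "u \<in> {1..k}"
    have c1: "\<not> (u \<in> A \<and> n + 1 - u \<in> B)"
    proof
      assume "u \<in> A \<and> n + 1 - u \<in> B"
      then have "u + (n + 1 - u) \<in> sumset A B" by (auto intro: in_sumset)
      moreover have "u + (n + 1 - u) = n + 1" using u k2 by auto
      ultimately show False using nS by simp
    qed
    have c2: "\<not> (u \<in> B \<and> n + 1 - u \<in> A)"
    proof
      assume "u \<in> B \<and> n + 1 - u \<in> A"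
      then have "(n + 1 - u) + u \<in> sumset A B" by (auto intro: in_sumset)
      moreover have "(n + 1 - u) + u = n + 1" using u k2 by auto
      ultimately show False using nS by simp
    qed
    have c3: "u < x \<longrightarrow> u \<notin> A" using gA u by auto
    have c4: "u = x \<longrightarrow> u \<in> A" using gx u k2 by auto
    show "sig n A B u \<in> ok x u"
      using u c1 c2 c3 c4 by (simp add: sig_def ok_def k_def)
  next
    fix u assume "u \<notin> {1..k}"
    then show "sig n A B u = undefined" by (auto simp: sig_def k_def)
  qed
  define mu where "mu u = (u \<in> A \<or> u \<in> B \<or> (x < u \<and> u - x \<in> B))" for u
  define mv where "mv u = (n+1-u \<in> A \<or> n+1-u \<in> B \<or> (u + x \<le> k \<and> n+1-(u+x) \<in> B))" for u
  define S1 where "S1 = {u\<in>{1..k}. mu u}"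
  define S2 where "S2 = {u\<in>{1..k}. mv u}"
  have wu_eq: "wu x (sig n A B) u = wt (mu u)" if u: "u \<in> {1..k}" for u
  proof -
    have "x < u \<Longrightarrow> u - x \<in> {1..k}" using u by auto
    then show ?thesis using u by (cases "x < u") (auto simp: wu_def mu_def sig_def k_def)
  qed
  have wv_eq: "wv k x (sig n A B) u = wt (mv u)" if u: "u \<in> {1..k}" for u
  proof -
    have "u + x \<le> k \<Longrightarrow> u + x \<in> {1..k}" using u by auto
    then show ?thesis using u by (cases "u + x \<le> k") (auto simp: wv_def mv_def sig_def k_def)
  qed
  have "(\<Prod>u\<in>{1..k}. wu x (sig n A B) u * wv k x (sig n A B) u) = (\<Prod>u\<in>{1..k}. wt (mu u) * wt (mv u))"
    by (rule prod.cong) (auto simp: wu_eq wv_eq)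
  also have "\<dots> = (1/2) ^ card S1 * (1/2) ^ card S2"
    by (simp add: prod.distrib prod_wt S1_def S2_def)
  also have "\<dots> = (1/2) ^ (card S1 + card S2)" by (simp add: power_add)
  finally have Weq: "(\<Prod>u\<in>{1..k}. wu x (sig n A B) u * wv k x (sig n A B) u) = (1/2) ^ (card S1 + card S2)" .
  define M where "M = S1 \<union> (\<lambda>u. n + 1 - u) ` S2"
  have xA: "x < u \<Longrightarrow> u \<le> k \<Longrightarrow> x \<in> A" for u using gx k2 by auto
  have MS: "M \<subseteq> sumset A B \<inter> {0..n}"
  proof
    fix e assume "e \<in> M"
    then consider (a) "e \<in> S1" | (b) u where "u \<in> S2" "e = n + 1 - u" unfolding M_def by auto
    then show "e \<in> sumset A B \<inter> {0..n}"
    proof cases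
      case a
      then have u: "e \<in> {1..k}" "mu e" by (auto simp: S1_def)
      have "e \<in> sumset A B"
      proof -
        consider "e \<in> A" | "e \<in> B" | "x < e \<and> e - x \<in> B" using u mu_def by auto
        then show ?thesis
        proof cases
          case 1 then show ?thesis using in_sumset[OF 1 B0] by simp
        next
          case 2 then show ?thesis using in_sumset[OF A0 2] by simp
        next
          case 3
          then have "x \<in> A" using xA u by auto
          then have "x + (e - x) \<in> sumset A B" using 3 by (intro in_sumset) auto
          moreover have "x + (e - x) = e" using 3 by auto
          ultimately show ?thesis by simp
        qed
      qed
      then show ?thesis using u k2 by auto
    next
      case b
      then have u: "u \<in> {1..k}" "mv u" by (auto simp: S2_def)
      have "n + 1 - u \<in> sumset A B"
      proof -
        consider "n+1-u \<in> A" | "n+1-u \<in> B" | "u + x \<le> k \<and> n+1-(u+x) \<in> B" using u mv_def by auto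
        then show ?thesis
        proof cases
          case 1 then show ?thesis using in_sumset[OF 1 B0] by simp
        next
          case 2 then show ?thesis using in_sumset[OF A0 2] by simp
        next
          case 3
          then have "x \<in> A" using gx k2 x1 by auto
          then have "x + (n+1-(u+x)) \<in> sumset A B" using 3 by (intro in_sumset) auto
          moreover have "x + (n+1-(u+x)) = n + 1 - u" using 3 k2 by auto
          ultimately show ?thesis by simp
        qed
      qed
      then show ?thesis using u k2 b by auto
    qed
  qed
  have disj: "S1 \<inter> (\<lambda>u. n + 1 - u) ` S2 = {}"
    using k2 by (auto simp: S1_def S2_def)
  have inj: "inj_on (\<lambda>u. n + 1 - u) S2"
    by (rule inj_onI) (auto simp: S2_def k_def)
  have cardM: "card M = card S1 + card S2"
    unfolding M_def using disj inj
    by (simp add: card_Un_disjoint card_image S1_def S2_def)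
  have finS: "finite (sumset A B \<inter> {0..n})" by simp
  have "card M \<le> card (sumset A B \<inter> {0..n})" by (rule card_mono[OF finS MS])
  then have "(1/2::real) ^ card (sumset A B \<inter> {0..n}) \<le> (1/2) ^ card M"
    by (intro power_decreasing) auto
  then show "(1/2::real) ^ card (sumset A B \<inter> {0..n}) \<le> (\<Prod>u\<in>{1..k}. wu x (sig n A B) u * wv k x (sig n A B) u)"
    using Weq cardM by simp
qed


definition PP :: "nat \<Rightarrow> (nat set \<times> nat set) set" where
  "PP n = {(S1, S2). S1 \<subseteq> {0..n} \<and> S2 \<subseteq> {0..n} \<and> 0 \<in> S1 \<and> 0 \<in> S2 \<and> n + 1 \<notin> sumset S1 S2}"
definition FF :: "nat \<Rightarrow> nat set \<times> nat set \<Rightarrow> real" where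
  "FF n p = (1/2::real) ^ card (sumset (fst p) (snd p) \<inter> {0..n})"
definition good :: "nat \<Rightarrow> nat \<Rightarrow> nat set \<Rightarrow> bool" where
  "good n x A = (A \<inter> {1..<x} = {} \<and> (x \<le> n \<longrightarrow> x \<in> A))"

lemma g_eq: "1 \<le> n \<Longrightarrow> g (int n) = (\<Sum>p\<in>PP n. FF n p)"
  by (simp add: g_def PP_def FF_def Let_def)

lemma finite_PP: "finite (PP n)"
proof -
  have "PP n \<subseteq> Pow {0..n} \<times> Pow {0..n}" by (auto simp: PP_def)
  then show ?thesis by (rule finite_subset) simp
qed

lemma FF_nn: "0 \<le> FF n p" by (simp add: FF_def)

lemma sig_inj:
  assumes AS: "A \<subseteq> {0..n}" "A' \<subseteq> {0..n}" "B \<subseteq> {0..n}" "B' \<subseteq> {0..n}"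
    and Z: "0 \<in> A" "0 \<in> A'" "0 \<in> B" "0 \<in> B'"
    and E: "sig n A B = sig n A' B'"
    and m1: "(n div 2 + 1 \<in> A) = (n div 2 + 1 \<in> A')" and m2: "(n div 2 + 1 \<in> B) = (n div 2 + 1 \<in> B')"
  shows "A = A' \<and> B = B'"
proof -
  have lo: "(u \<in> A) = (u \<in> A') \<and> (u \<in> B) = (u \<in> B') \<and> (n+1-u \<in> A) = (n+1-u \<in> A') \<and> (n+1-u \<in> B) = (n+1-u \<in> B')"
    if u: "u \<in> {1..n div 2}" for u
  proof -
    have "sig n A B u = sig n A' B' u" using E by simp
    then show ?thesis using u by (simp add: sig_def)
  qed
  have all: "(e \<in> A) = (e \<in> A') \<and> (e \<in> B) = (e \<in> B')" for e
  proof -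
    consider "e = 0" | "n < e" | "1 \<le> e \<and> e \<le> n div 2" | "e = n div 2 + 1" | "n div 2 + 2 \<le> e \<and> e \<le> n" by linarith
    then show ?thesis
    proof cases
      case 1 then show ?thesis using Z by simp
    next
      case 2 then show ?thesis using AS by auto
    next
      case 3 then show ?thesis using lo[of e] by simp
    next
      case 4 then show ?thesis using m1 m2 by simp
    next
      case 5
      then have u: "n + 1 - e \<in> {1..n div 2}" by auto
      have "n + 1 - (n + 1 - e) = e" using 5 by auto
      then show ?thesis using lo[OF u] by simp
    qed
  qed
  show ?thesis using all by blast
qed

lemma per_x:
  assumes x1: "1 \<le> x"
  shows "(\<Sum>p\<in>{p\<in>PP n. good n x (fst p)}. FF n p) \<le> 4 * rho ^ (n div 2)"
proof -
  define k where "k = n div 2"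
  define Px where "Px = {p\<in>PP n. good n x (fst p)}"
  define phi where "phi p = (sig n (fst p) (snd p), (k+1 \<in> fst p, k+1 \<in> snd p))" for p
  define W where "W \<sigma> = Phi k x k \<sigma>" for \<sigma>
  have Wnn: "0 \<le> W \<sigma>" for \<sigma> unfolding W_def Phi_def by (intro prod_nonneg) (simp add: fac_nn)
  have finPx: "finite Px" unfolding Px_def using finite_PP by simp
  have c: "FF n p \<le> W (fst (phi p)) \<and> phi p \<in> PiE {1..k} (ok x) \<times> UNIV" if p: "p \<in> Px" for p
  proof -
    obtain A B where pAB: "p = (A, B)" by fastforce
    have h: "A \<subseteq> {0..n}" "B \<subseteq> {0..n}" "0 \<in> A" "0 \<in> B" "n + 1 \<notin> sumset A B"
        "A \<inter> {1..<x} = {}" "x \<le> n \<longrightarrow> x \<in> A"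
      using p by (auto simp: Px_def PP_def good_def pAB)
    note cc = conn[OF x1 h]
    show ?thesis
      using cc by (simp add: pAB phi_def W_def FF_def Phi_final k_def)
  qed
  have inj: "inj_on phi Px"
  proof (rule inj_onI)
    fix p q assume p: "p \<in> Px" and q: "q \<in> Px" and e: "phi p = phi q"
    obtain A B where pAB: "p = (A, B)" by fastforce
    obtain A' B' where qAB: "q = (A', B')" by fastforce
    have h: "A \<subseteq> {0..n}" "A' \<subseteq> {0..n}" "B \<subseteq> {0..n}" "B' \<subseteq> {0..n}" "0 \<in> A" "0 \<in> A'" "0 \<in> B" "0 \<in> B'"
      using p q by (auto simp: Px_def PP_def pAB qAB)
    have e2: "sig n A B = sig n A' B'" "(n div 2 + 1 \<in> A) = (n div 2 + 1 \<in> A')" "(n div 2 + 1 \<in> B) = (n div 2 + 1 \<in> B')"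
      using e by (auto simp: phi_def pAB qAB k_def)
    show "p = q" using sig_inj[OF h e2] pAB qAB by simp
  qed
  have "(\<Sum>p\<in>Px. FF n p) \<le> (\<Sum>p\<in>Px. W (fst (phi p)))"
    by (rule sum_mono) (use c in blast)
  also have "\<dots> = (\<Sum>z\<in>phi ` Px. W (fst z))"
    by (simp add: sum.reindex[OF inj])
  also have "\<dots> \<le> (\<Sum>z\<in>PiE {1..k} (ok x) \<times> (UNIV :: (bool \<times> bool) set). W (fst z))"
  proof (rule sum_mono2)
    show "finite (PiE {1..k} (ok x) \<times> (UNIV :: (bool \<times> bool) set))" by (simp add: finite_PiE finite_ok)
    show "phi ` Px \<subseteq> PiE {1..k} (ok x) \<times> (UNIV :: (bool \<times> bool) set)" using c by blast
  qed (simp add: Wnn)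
  also have "\<dots> = (\<Sum>(\<sigma>,m)\<in>PiE {1..k} (ok x) \<times> (UNIV :: (bool \<times> bool) set). W \<sigma>)"
    by (simp add: case_prod_beta)
  also have "\<dots> = (\<Sum>\<sigma>\<in>PiE {1..k} (ok x). \<Sum>m\<in>(UNIV :: (bool \<times> bool) set). W \<sigma>)"
    by (rule sum.cartesian_product[symmetric])
  also have "\<dots> = (\<Sum>\<sigma>\<in>PiE {1..k} (ok x). real (card (UNIV :: (bool \<times> bool) set)) * W \<sigma>)"
    by simp
  also have "card (UNIV :: (bool \<times> bool) set) = 4"
    by (simp add: card_UNIV_bool flip: UNIV_Times_UNIV)
  also have "(\<Sum>\<sigma>\<in>PiE {1..k} (ok x). real 4 * W \<sigma>) = 4 * (\<Sum>\<sigma>\<in>PiE {1..k} (ok x). W \<sigma>)"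
    by (simp add: sum_distrib_left)
  also have "\<dots> \<le> 4 * rho ^ k"
    using main_ind[OF x1, of k k] by (simp add: W_def)
  finally show ?thesis by (simp add: Px_def k_def)
qed

lemma exists_good: assumes "A \<subseteq> {0..n}" shows "\<exists>x\<in>{1..n+1}. good n x A"
proof (cases "{a\<in>A. 0 < a} = {}")
  case True
  then show ?thesis by (intro bexI[of _ "n+1"]) (auto simp: good_def)
next
  case False
  define x where "x = Min {a\<in>A. 0 < a}"
  have fin: "finite {a\<in>A. 0 < a}" by (rule finite_subset[of _ "{0..n}"]) (use assms in auto)
  have xin: "x \<in> {a\<in>A. 0 < a}" unfolding x_def using fin False by (rule Min_in)
  have xmin: "\<And>a. a \<in> A \<Longrightarrow> 0 < a \<Longrightarrow> x \<le> a" unfolding x_def using fin by auto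
  have "good n x A" unfolding good_def using xin xmin by fastforce
  moreover have "x \<in> {1..n+1}" using xin assms by auto
  ultimately show ?thesis by blast
qed

lemma g_bound: "1 \<le> n \<Longrightarrow> g (int n) \<le> 4 * real (n + 1) * rho ^ (n div 2)"
proof -
  assume n1: "1 \<le> n"
  have "g (int n) = (\<Sum>p\<in>PP n. FF n p)" using g_eq[OF n1] .
  also have "\<dots> \<le> (\<Sum>p\<in>PP n. \<Sum>x\<in>{1..n+1}. if good n x (fst p) then FF n p else 0)"
  proof (rule sum_mono)
    fix p assume p: "p \<in> PP n"
    then have "fst p \<subseteq> {0..n}" by (auto simp: PP_def)
    then obtain x where x: "x \<in> {1..n+1}" "good n x (fst p)" using exists_good by blast
    have "FF n p = (if good n x (fst p) then FF n p else 0)" using x by simp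
    also have "\<dots> \<le> (\<Sum>x\<in>{1..n+1}. if good n x (fst p) then FF n p else 0)"
      by (rule member_le_sum[OF x(1)]) (auto simp: FF_nn)
    finally show "FF n p \<le> (\<Sum>x\<in>{1..n+1}. if good n x (fst p) then FF n p else 0)" .
  qed
  also have "\<dots> = (\<Sum>x\<in>{1..n+1}. \<Sum>p\<in>PP n. if good n x (fst p) then FF n p else 0)"
    by (rule sum.swap)
  also have "\<dots> = (\<Sum>x\<in>{1..n+1}. \<Sum>p\<in>{p\<in>PP n. good n x (fst p)}. FF n p)"
    by (simp add: sum.inter_filter finite_PP)
  also have "\<dots> \<le> (\<Sum>x\<in>{1..n+1}. 4 * rho ^ (n div 2))"
    by (rule sum_mono) (rule per_x, simp)
  also have "\<dots> = 4 * real (n + 1) * rho ^ (n div 2)" by simp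
  finally show ?thesis .
qed


lemma arith_bound: "4 * real (n + 1) * rho ^ (n div 2) \<le> 531 * (2 - 1/100) ^ n"
proof -
  define sb :: real where "sb = 79/40"
  define q :: real where "q = 398/395"
  have rs: "rho \<le> sb ^ 2" by (simp add: rho_def sb_def power2_eq_square)
  have "rho ^ (n div 2) \<le> (sb ^ 2) ^ (n div 2)"
    by (rule power_mono[OF rs]) (simp add: rho_def)
  also have "\<dots> = sb ^ (2 * (n div 2))" by (simp add: power_mult)
  also have "\<dots> \<le> sb ^ n" by (rule power_increasing) (auto simp: sb_def)
  finally have r1: "rho ^ (n div 2) \<le> sb ^ n" .
  have bern: "1 + real n * (3/395) \<le> q ^ n"
    using Bernoulli_inequality[of "3/395::real" n] by (simp add: q_def)
  have q1: "1 \<le> q ^ n" by (rule one_le_power) (simp add: q_def)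
  have r2: "real (n + 1) \<le> 398/3 * q ^ n" using bern q1 by simp
  have "4 * real (n + 1) * rho ^ (n div 2) \<le> 4 * (398/3 * q ^ n) * sb ^ n"
    using r1 r2 by (intro mult_mono) (auto simp: rho_def sb_def q_def)
  also have "\<dots> = 1592/3 * (q * sb) ^ n" by (simp add: power_mult_distrib)
  also have "q * sb = 2 - 1/100" by (simp add: q_def sb_def)
  also have "1592/3 * (2 - 1/100::real) ^ n \<le> 531 * (2 - 1/100) ^ n"
    by (rule mult_right_mono) auto
  finally show ?thesis .
qed

theorem mainTheorem11:
  shows "\<exists>\<epsilon>::real. \<exists>C::real. \<epsilon> > 0 \<and> C > 0 \<and>
           (\<forall>n::nat. n \<ge> 1 \<longrightarrow> g (int n) \<le> C * (2 - \<epsilon>) ^ n)"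
proof -
  have "\<forall>n::nat. n \<ge> 1 \<longrightarrow> g (int n) \<le> 531 * (2 - 1/100) ^ n"
    using g_bound arith_bound order_trans by blast
  moreover have "(0::real) < 1/100" "(0::real) < 531" by auto
  ultimately show ?thesis by blast
qed

end
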